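(* Let $(X,\mathcal B,\mu,T)$ be a measure preserving system (a probability space with a measurable map $T\colon X\to X$ preserving $\mu$), let $f\colon X\to[0,\infty]$ be a measurable function, and let $(s_n)_{n\ge1}$ be a two-jumpy scale sequence. Then the function $F(x)=\liminf_{n\to\infty} s_n f(T^n x)$ satisfies $\mu\big(F^{-1}(\{0,\infty\})\big)=1$.
   Context: A scale sequence is a sequence $(s_n)_{n\ge1}$ of positive reals with $s_n\to\infty$. It is two-jumpy if $s_{n+1}\ge s_n$ for all sufficiently large $n$ and $\liminf_{n\to\infty} s_{2n}/s_n>1$. *)

theory Defs
  imports "HOL-Probability.Probability"
begin

text \<open>Sequences are indexed by nat; the value at index 0 is ignored (the paper indexes from 1).\<close>

definition scale_sequence :: "(nat \<Rightarrow> real) \<Rightarrow> bool" where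
  "scale_sequence s \<longleftrightarrow> (\<forall>n\<ge>1. s n > 0) \<and> filterlim s at_top sequentially"

definition two_jumpy :: "(nat \<Rightarrow> real) \<Rightarrow> bool" where
  "two_jumpy s \<longleftrightarrow> (\<forall>\<^sub>F n in sequentially. s n \<le> s (Suc n))
     \<and> liminf (\<lambda>n. ereal (s (2 * n) / s n)) > 1"

definition measure_preserving_system :: "'a measure \<Rightarrow> ('a \<Rightarrow> 'a) \<Rightarrow> bool" where
  "measure_preserving_system M T \<longleftrightarrow>
     prob_space M \<and> T \<in> measurable M M \<and> distr M M T = M"

end

theory Submission
  imports Defs
begin


lemma comb_cover:
  fixes d :: "nat \<Rightarrow> real" and \<theta> :: real and L :: nat
  assumes d01: "\<And>t. 0 \<le> d t" "\<And>t. d t \<le> 1" and th: "\<theta> > 0"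
  defines "e \<equiv> (\<lambda>t. \<exists>b\<in>{1..L}. \<theta> * b \<le> (\<Sum>i\<in>{t..<t+b}. d i))"
  shows "\<theta> * card {t\<in>{s..<J}. e t} \<le> (\<Sum>i\<in>{s..<J+L}. d i)"
proof (induction "J - s" arbitrary: s rule: less_induct)
  case less
  have dnn: "0 \<le> (\<Sum>i\<in>A. d i)" for A by (simp add: d01 sum_nonneg)
  show ?case
  proof (cases "s < J")
    case False
    then have E: "{t\<in>{s..<J}. e t} = {}" by auto
    show ?thesis by (simp only: E card.empty) (simp add: dnn)
  next
    case sJ: True
    show ?thesis
    proof (cases "e s")
      case False
      then have eq: "{t\<in>{s..<J}. e t} = {t\<in>{Suc s..<J}. e t}" using le_eq_less_or_eq by (auto simp: Suc_le_eq)
      have IH: "\<theta> * card {t\<in>{Suc s..<J}. e t} \<le> (\<Sum>i\<in>{Suc s..<J+L}. d i)"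
        using less sJ by auto
      have "(\<Sum>i\<in>{Suc s..<J+L}. d i) \<le> (\<Sum>i\<in>{s..<J+L}. d i)"
        by (rule sum_mono2) (auto simp: d01)
      then show ?thesis using IH eq by simp
    next
      case True
      then obtain b where b: "b \<in> {1..L}" "\<theta> * b \<le> (\<Sum>i\<in>{s..<s+b}. d i)"
        unfolding e_def by blast
      have IH: "\<theta> * card {t\<in>{s+b..<J}. e t} \<le> (\<Sum>i\<in>{s+b..<J+L}. d i)"
        using less sJ b by auto
      have sub: "{t\<in>{s..<J}. e t} \<subseteq> {s..<s+b} \<union> {t\<in>{s+b..<J}. e t}" by auto
      have "card {t\<in>{s..<J}. e t} \<le> card ({s..<s+b} \<union> {t\<in>{s+b..<J}. e t})"
        by (rule card_mono[OF _ sub]) auto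
      also have "\<dots> \<le> card {s..<s+b} + card {t\<in>{s+b..<J}. e t}" by (rule card_Un_le)
      finally have c: "real (card {t\<in>{s..<J}. e t}) \<le> real b + card {t\<in>{s+b..<J}. e t}"
        by simp
      have split: "(\<Sum>i\<in>{s..<s+b}. d i) + (\<Sum>i\<in>{s+b..<J+L}. d i) = (\<Sum>i\<in>{s..<J+L}. d i)"
        using b sJ by (intro sum.atLeastLessThan_concat) auto
      have "\<theta> * card {t\<in>{s..<J}. e t} \<le> \<theta> * (real b + card {t\<in>{s+b..<J}. e t})"
        using c th by (intro mult_left_mono) auto
      also have "\<dots> \<le> (\<Sum>i\<in>{s..<J+L}. d i)" using IH b(2) split
        by (simp add: distrib_left)
      finally show ?thesis .
    qed
  qed
qed


lemma maximal_ineq: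
  fixes \<theta> :: real and L :: nat
  assumes P: "prob_space M" and Tm: "T \<in> M \<rightarrow>\<^sub>M M"
    and pres: "\<And>n. distr M M (T ^^ n) = M"
    and D: "D \<in> sets M" and th: "\<theta> > 0"
  defines "E \<equiv> {x\<in>space M. \<exists>b\<in>{1..L}. \<theta> * b \<le> (\<Sum>i\<in>{0..<b}. indicator D ((T ^^ i) x))}"
  shows "E \<in> sets M" "\<theta> * measure M E \<le> measure M D"
proof -
  interpret prob_space M by fact
  have Tn: "T ^^ n \<in> M \<rightarrow>\<^sub>M M" for n using Tm by (rule measurable_compose_n)
  show Es: "E \<in> sets M" unfolding E_def using Tn D by measurable
  have intT: "integral\<^sup>L M (\<lambda>x. indicator A ((T ^^ t) x) :: real) = measure M A" if "A \<in> sets M" for A t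
  proof -
    have "integral\<^sup>L M (\<lambda>x. indicator A ((T ^^ t) x) :: real) = integral\<^sup>L (distr M M (T ^^ t)) (indicator A)"
      using Tn that by (subst integral_distr) auto
    also have "\<dots> = measure M A" using pres that by (simp add: Int_absorb2 sets.sets_into_space)
    finally show ?thesis .
  qed
  have intg: "integrable M (\<lambda>x. indicator A ((T ^^ t) x) :: real)" if "A \<in> sets M" for A t
    using that Tn by (intro integrable_const_bound[where B=1]) auto
  have key: "real J * (\<theta> * measure M E) \<le> real (J + L) * measure M D" for J
  proof -
    have pw: "\<theta> * (\<Sum>t<J. indicator E ((T ^^ t) x)) \<le> (\<Sum>i<J+L. indicator D ((T ^^ i) x) :: real)"
      if x: "x \<in> space M" for x
    proof -
      define d where "d i = (indicator D ((T ^^ i) x) :: real)" for i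
      have ev: "(T ^^ t) x \<in> E \<longleftrightarrow> (\<exists>b\<in>{1..L}. \<theta> * b \<le> (\<Sum>i\<in>{t..<t+b}. d i))" for t
      proof -
        have sp: "(T ^^ t) x \<in> space M" by (rule measurable_space[OF Tn x])
        have "(\<Sum>i\<in>{0..<b}. indicator D ((T ^^ i) ((T ^^ t) x))) = (\<Sum>i\<in>{t..<t+b}. d i)" for b
        proof -
          have "(\<Sum>i\<in>{t..<t+b}. d i) = (\<Sum>i\<in>{0+t..<b+t}. d i)" by (metis add.commute add_0)
          also have "\<dots> = (\<Sum>i\<in>{0..<b}. d (i + t))" by (rule sum.shift_bounds_nat_ivl)
          finally show ?thesis by (simp add: d_def funpow_add)
        qed
        then show ?thesis using sp unfolding E_def by auto
      qed
      have c: "\<theta> * card {t\<in>{0..<J}. (T ^^ t) x \<in> E} \<le> (\<Sum>i\<in>{0..<J+L}. d i)"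
        unfolding ev by (rule comb_cover) (auto simp: d_def th)
      have "(\<Sum>t<J. indicator E ((T ^^ t) x) :: real) = card {t\<in>{0..<J}. (T ^^ t) x \<in> E}"
        by (simp add: indicator_def sum.If_cases lessThan_atLeast0) (intro arg_cong[where f=card], auto)
      then show ?thesis using c by (simp add: d_def lessThan_atLeast0)
    qed
    have "integral\<^sup>L M (\<lambda>x. \<theta> * (\<Sum>t<J. indicator E ((T ^^ t) x))) \<le> integral\<^sup>L M (\<lambda>x. (\<Sum>i<J+L. indicator D ((T ^^ i) x) :: real))"
      using pw Es D intg by (intro integral_mono) auto
    also have "\<dots> = (\<Sum>i<J+L. measure M D)" using Bochner_Integration.integral_sum[where I="{..<J+L}" and f="\<lambda>i x. indicator D ((T^^i) x) :: real"] intg[OF D] intT[OF D] by simp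
    also have "integral\<^sup>L M (\<lambda>x. \<theta> * (\<Sum>t<J. indicator E ((T ^^ t) x))) = \<theta> * (\<Sum>t<J. measure M E)"
      using Bochner_Integration.integral_sum[where I="{..<J}" and f="\<lambda>i x. indicator E ((T^^i) x) :: real"] intg[OF Es] intT[OF Es] by simp
    finally show ?thesis by (simp add: algebra_simps)
  qed
  show "\<theta> * measure M E \<le> measure M D"
  proof (rule ccontr)
    assume "\<not> ?thesis"
    then have dpos: "\<theta> * measure M E - measure M D > 0" by simp
    obtain J :: nat where J: "J > L * measure M D / (\<theta> * measure M E - measure M D)"
      using reals_Archimedean2 by blast
    then have "J * (\<theta> * measure M E - measure M D) > L * measure M D"
      using dpos by (simp add: field_simps)
    then show False using key[of J] by (simp add: algebra_simps)
  qed
qed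


theorem theorem3p6:
  fixes M :: "'a measure" and T :: "'a \<Rightarrow> 'a" and f :: "'a \<Rightarrow> ennreal" and s :: "nat \<Rightarrow> real"
  assumes "measure_preserving_system M T"
    and "f \<in> borel_measurable M"
    and "scale_sequence s" and "two_jumpy s"
  defines "F \<equiv> (\<lambda>x. liminf (\<lambda>n. ennreal (s n) * f ((T ^^ n) x)))"
  shows "emeasure M {x \<in> space M. F x = 0 \<or> F x = \<infinity>} = 1"
proof -
  from assms(1) have P: "prob_space M" and Tm: "T \<in> M \<rightarrow>\<^sub>M M" and dT: "distr M M T = M"
    unfolding measure_preserving_system_def by auto
  interpret prob_space M by fact
  have fm: "f \<in> borel_measurable M" by fact
  have Tn: "T ^^ n \<in> M \<rightarrow>\<^sub>M M" for n by (rule measurable_compose_n[OF Tm])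
  have pres: "distr M M (T ^^ n) = M" for n
  proof (induction n)
    case 0
    then show ?case by (simp add: id_def distr_id)
  next
    case (Suc n)
    have "distr M M (T ^^ Suc n) = distr M M (T \<circ> T ^^ n)" by (simp only: funpow.simps)
    also have "\<dots> = distr (distr M M (T ^^ n)) M T" using Tm Tn by (simp add: distr_distr)
    also have "\<dots> = M" using Suc dT by simp
    finally show ?case .
  qed
  have presE: "emeasure M ((T ^^ n) -` A \<inter> space M) = emeasure M A" if "A \<in> sets M" for n A
    using emeasure_distr[OF Tn that, of n] pres[of n] by simp
  have Fm: "F \<in> borel_measurable M" unfolding F_def
    using fm Tn by (intro borel_measurable_liminf) (measurable, auto intro: measurable_compose)
  have spos: "\<And>n. n \<ge> 1 \<Longrightarrow> s n > 0" using assms(3) unfolding scale_sequence_def by auto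
  obtain n2 where n2: "\<And>n. n \<ge> n2 \<Longrightarrow> s n \<le> s (Suc n)"
    using assms(4) unfolding two_jumpy_def eventually_sequentially by auto
  obtain lam :: real where lam: "1 < ereal lam" "ereal lam < liminf (\<lambda>n. ereal (s (2 * n) / s n))"
    using assms(4) ereal_dense2 unfolding two_jumpy_def by blast
  obtain n3 where n3: "\<And>n. n \<ge> n3 \<Longrightarrow> ereal lam < ereal (s (2 * n) / s n)"
    using less_LiminfD[OF lam(2)] unfolding eventually_sequentially by auto
  define n1 where "n1 = max 1 (max n2 n3)"
  have n1: "n1 \<ge> 1" "\<And>n. n \<ge> n1 \<Longrightarrow> s n > 0" "\<And>n. n \<ge> n1 \<Longrightarrow> s n \<le> s (Suc n)"
    "\<And>n. n \<ge> n1 \<Longrightarrow> lam * s n \<le> s (2 * n)"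
  proof -
    show "n1 \<ge> 1" "\<And>n. n \<ge> n1 \<Longrightarrow> s n > 0" "\<And>n. n \<ge> n1 \<Longrightarrow> s n \<le> s (Suc n)"
      using spos n2 unfolding n1_def by auto
    fix n assume "n \<ge> n1"
    then have "lam < s (2 * n) / s n" "s n > 0" using n3 spos unfolding n1_def by auto
    then show "lam * s n \<le> s (2 * n)" by (simp add: field_simps)
  qed
  have lam1: "lam > 1" using lam(1) by simp
  have smono: "s m \<le> s n" if "n1 \<le> m" "m \<le> n" for m n
    using that(2)
  proof (induction n rule: dec_induct)
    case base then show ?case by simp
  next
    case (step n) then show ?case using n1(3)[of n] that(1) by simp
  qed
  have sdouble: "lam ^ j * s k \<le> s (2 ^ j * k)" if "k \<ge> n1" for j k
  proof (induction j)
    case 0 then show ?case by simp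
  next
    case (Suc j)
    have ge: "2 ^ j * k \<ge> n1" using that by (metis le_trans mult_le_mono1 mult_1 one_le_power one_le_numeral)
    have "lam ^ Suc j * s k = lam * (lam ^ j * s k)" by simp
    also have "\<dots> \<le> lam * s (2 ^ j * k)" using Suc lam1 by (intro mult_left_mono) auto
    also have "\<dots> \<le> s (2 * (2 ^ j * k))" using n1(4)[OF ge] .
    finally show ?case by (simp add: mult.assoc)
  qed
  have FT: "F (T x) \<le> F x" for x
  proof -
    have "F (T x) = liminf (\<lambda>n. ennreal (s n) * f ((T ^^ Suc n) x))"
      unfolding F_def by (simp add: funpow_Suc_right del: funpow.simps)
    also have "\<dots> \<le> liminf (\<lambda>n. ennreal (s (Suc n)) * f ((T ^^ Suc n) x))"
    proof (rule Liminf_mono)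
      show "\<forall>\<^sub>F n in sequentially. ennreal (s n) * f ((T ^^ Suc n) x) \<le> ennreal (s (Suc n)) * f ((T ^^ Suc n) x)"
        unfolding eventually_sequentially
        using n1(3) by (intro exI[of _ n1] allI impI mult_right_mono ennreal_leI) auto
    qed
    also have "\<dots> = F x" unfolding F_def using liminf_shift[of "\<lambda>n. ennreal (s n) * f ((T ^^ n) x)"] by simp
    finally show ?thesis .
  qed
  have key: "emeasure M {x\<in>space M. ennreal a < F x \<and> F x < ennreal b} = 0"
    if ab: "0 < a" "a < b" for a b :: real
  proof -
    obtain j where j: "b / a < lam ^ j" using real_arch_pow[OF lam1] by blast
    define P :: nat where "P = 2 ^ j"
    have P1: "P \<ge> 1" unfolding P_def by simp
    define \<theta> :: real where "\<theta> = 1 / (2 * P)"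
    have th: "\<theta> > 0" unfolding \<theta>_def using P1 by simp
    have scal: "b / a * s k \<le> s n" if "k \<ge> n1" "n \<ge> P * k" for k n
    proof -
      have "b / a * s k \<le> lam ^ j * s k" using j n1(2)[OF that(1)] by (intro mult_right_mono) auto
      also have "\<dots> \<le> s (P * k)" unfolding P_def by (rule sdouble[OF that(1)])
      also have "\<dots> \<le> s n" using that P1
        by (intro smono) (auto intro: le_trans[OF _ mult_le_mono1[of 1 P k], simplified])
      finally show ?thesis .
    qed
    define U where "U = {x\<in>space M. ennreal a < F x}"
    have Us: "U \<in> sets M" unfolding U_def using Fm by measurable
    define V where "V = T -` U \<inter> space M"
    have VU: "V \<subseteq> U" unfolding V_def U_def using FT Tm measurable_space
      by (auto intro: less_le_trans)
    have Vs: "V \<in> sets M" unfolding V_def using Tm Us by (rule measurable_sets)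
    have "emeasure M V = emeasure M U" unfolding V_def using presE[OF Us, of 1] by simp
    then have UV0: "emeasure M (U - V) = 0" using emeasure_Diff[OF _ Us Vs VU] by simp
    define Z where "Z = (\<Union>m. (T ^^ m) -` (U - V) \<inter> space M)"
    have Z0: "emeasure M Z = 0" unfolding Z_def
    proof (rule emeasure_UN_eq_0)
      show "emeasure M ((T ^^ m) -` (U - V) \<inter> space M) = 0" for m
        using presE[of "U - V" m] UV0 Us Vs by auto
      show "range (\<lambda>m. (T ^^ m) -` (U - V) \<inter> space M) \<subseteq> sets M"
        using Tn Us Vs by (auto intro: measurable_sets)
    qed
    have Zs: "Z \<in> sets M" unfolding Z_def using Tn Us Vs by (auto intro!: sets.countable_UN measurable_sets)
    have stay: "(T ^^ m) x \<in> U" if "x \<in> U" "x \<notin> Z" for x m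
    proof (induction m)
      case 0 then show ?case using that by simp
    next
      case (Suc m)
      have sp: "x \<in> space M" using that(1) unfolding U_def by simp
      have "(T ^^ m) x \<notin> U - V" using that(2) sp unfolding Z_def by auto
      then have "(T ^^ m) x \<in> V" using Suc by simp
      then show ?case unfolding V_def by simp
    qed
    define G where "G N = {y\<in>space M. \<forall>k. N \<le> k \<longrightarrow> ennreal a \<le> ennreal (s k) * f ((T ^^ k) y)}" for N
    have Gs: "G N \<in> sets M" for N unfolding G_def
      using fm Tn by (intro sets.sets_Collect_countable_All) (measurable, auto intro: measurable_compose)
    define D where "D N = U - G N" for N
    have Ds: "D N \<in> sets M" for N unfolding D_def using Us Gs by auto
    have Dmono: "D N' \<subseteq> D N" if "N \<le> N'" for N N'
      unfolding D_def G_def using that by auto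
    have Dempty: "(\<Inter>N. D N) = {}"
    proof safe
      fix y assume y: "y \<in> (\<Inter>N. D N)"
      then have yU: "y \<in> U" unfolding D_def by auto
      then have "ennreal a < F y" unfolding U_def by auto
      from less_LiminfD[OF this[unfolded F_def]] obtain N where
        "\<forall>k\<ge>N. ennreal a < ennreal (s k) * f ((T ^^ k) y)" unfolding eventually_sequentially by auto
      then have "y \<in> G N" using yU unfolding G_def U_def by (auto intro: less_imp_le)
      then show "y \<in> {}" using y unfolding D_def by auto
    qed
    have INF0: "(INF N. emeasure M (D N)) = 0"
      using INF_emeasure_decseq[of D M] Ds Dmono Dempty by (auto simp: antimono_def)
    define E where "E N L = {x\<in>space M. \<exists>c\<in>{1..L}. \<theta> * c \<le> (\<Sum>i\<in>{0..<c}. indicator (D N) ((T ^^ i) x))}" for N L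
    have Es: "E N L \<in> sets M" for N L
      unfolding E_def using maximal_ineq(1)[OF P Tm pres Ds th] .
    have Ebound: "\<theta> * measure M (E N L) \<le> measure M (D N)" for N L
      unfolding E_def using maximal_ineq(2)[OF P Tm pres Ds th] .
    define A where "A = {x\<in>space M. ennreal a < F x \<and> F x < ennreal b}"
    have incl: "A - Z \<subseteq> (\<Union>L. E N L)" if N: "N \<ge> n1" for N
    proof
      fix x assume x: "x \<in> A - Z"
      then have xs: "x \<in> space M" and xU: "x \<in> U" and Fb: "F x < ennreal b" and xZ: "x \<notin> Z"
        unfolding A_def U_def by auto
      have "\<exists>n\<ge>2 * P * N. ennreal (s n) * f ((T ^^ n) x) < ennreal b"
      proof (rule ccontr)
        assume "\<not> ?thesis"
        then have "\<forall>\<^sub>F n in sequentially. ennreal b \<le> ennreal (s n) * f ((T ^^ n) x)"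
          unfolding eventually_sequentially by (auto simp: not_less)
        then have "ennreal b \<le> F x" unfolding F_def by (rule Liminf_bounded)
        then show False using Fb by simp
      qed
      then obtain n where n: "n \<ge> 2 * P * N" and bad: "ennreal (s n) * f ((T ^^ n) x) < ennreal b"
        by blast
      define q where "q = n div P"
      have N1: "N \<ge> 1" using N n1(1) by simp
      have qN: "q \<ge> 2 * N"
      proof -
        have "2 * N * P \<le> n" using n by (simp add: mult.commute mult.left_commute)
        then have "2 * N \<le> n div P" using P1 by (simp add: less_eq_div_iff_mult_less_eq)
        then show ?thesis unfolding q_def .
      qed
      have qn: "P * q \<le> n" unfolding q_def by simp
      have e: "P * q + n mod P = n" unfolding q_def by (rule mult_div_mod_eq)
      have m: "n mod P < P" using P1 by simp
      have "n < P * q + P" using e m by linarith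
      then have nq: "n < P * (q + 1)" by (simp add: distrib_left)
      have qle: "q \<le> n" using qn P1 by (metis le_trans mult_le_mono1 mult_1)
      have ind1: "indicator (D N) ((T ^^ i) x) = (1::real)" if i: "i \<in> {n - q..n - N}" for i
      proof -
        define k where "k = n - i"
        have k: "N \<le> k" "k \<le> q" "i = n - k" "n = k + i" using i qN qle N1 unfolding k_def by auto
        have yU: "(T ^^ i) x \<in> U" using stay[OF xU xZ] .
        have "(T ^^ i) x \<notin> G N"
        proof
          assume "(T ^^ i) x \<in> G N"
          then have "\<forall>k'. N \<le> k' \<longrightarrow> ennreal a \<le> ennreal (s k') * f ((T ^^ k') ((T ^^ i) x))"
            unfolding G_def by blast
          then have "ennreal a \<le> ennreal (s k) * f ((T ^^ k) ((T ^^ i) x))" using k(1) by blast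
          moreover have "(T ^^ k) ((T ^^ i) x) = (T ^^ n) x" using k(4) by (simp add: funpow_add)
          ultimately have ale: "ennreal a \<le> ennreal (s k) * f ((T ^^ n) x)" by simp
          have kn1: "k \<ge> n1" using k N by simp
          have sc: "b / a * s k \<le> s n"
            using scal[OF kn1] k qn by (meson le_trans mult_le_mono2)
          have "ennreal b = ennreal (b / a) * ennreal a" using ab by (simp flip: ennreal_mult)
          also have "\<dots> \<le> ennreal (b / a) * (ennreal (s k) * f ((T ^^ n) x))"
            by (intro mult_left_mono ale) auto
          also have "\<dots> = ennreal (b / a * s k) * f ((T ^^ n) x)"
            using ab n1(2)[OF kn1] by (subst ennreal_mult) (auto simp: mult.assoc)
          also have "\<dots> \<le> ennreal (s n) * f ((T ^^ n) x)"
            by (intro mult_right_mono ennreal_leI sc) auto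
          finally show False using bad by simp
        qed
        then have "(T ^^ i) x \<in> D N" using yU unfolding D_def by simp
        then show ?thesis by simp
      qed
      have "\<theta> * n \<le> real q - real N + 1"
      proof -
        have "real n < real (P * (q + 1))" using nq by (simp only: of_nat_less_iff)
        then have "real n < real P * (real q + 1)" by (simp add: distrib_left add.commute)
        then have "\<theta> * n < (real q + 1) / 2" unfolding \<theta>_def using P1 by (simp add: field_simps)
        moreover have "real q \<ge> 2 * real N" using qN by simp
        ultimately show ?thesis by simp
      qed
      also have "real q - real N + 1 = (\<Sum>i\<in>{n - q..n - N}. indicator (D N) ((T ^^ i) x))"
        using ind1 qN qle N1 by (simp add: of_nat_diff)
      also have "\<dots> \<le> (\<Sum>i\<in>{0..<n}. indicator (D N) ((T ^^ i) x))"
        using N1 qN qle by (intro sum_mono2) auto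
      finally have "\<theta> * n \<le> (\<Sum>i\<in>{0..<n}. indicator (D N) ((T ^^ i) x))" .
      moreover have "1 \<le> 2 * P * N" using N1 P1 by simp
      then have "n \<ge> 1" using n by linarith
      ultimately have "x \<in> E N n" unfolding E_def using xs by auto
      then show "x \<in> (\<Union>L. E N L)" by auto
    qed
    have As: "A \<in> sets M" unfolding A_def using Fm by measurable
    have Abound: "\<theta> * measure M A \<le> measure M (D N)" if N: "N \<ge> n1" for N
    proof -
      have Einc: "incseq (E N)" unfolding incseq_def E_def by force
      have "emeasure M (\<Union>L. E N L) = (SUP L. emeasure M (E N L))"
        using SUP_emeasure_incseq[of "E N" M] Es Einc by (metis image_subsetI)
      also have "\<dots> \<le> ennreal (measure M (D N) / \<theta>)"
      proof (rule SUP_least)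
        fix L
        have "measure M (E N L) \<le> measure M (D N) / \<theta>" using Ebound[of N L] th
          by (simp add: field_simps)
        then show "emeasure M (E N L) \<le> ennreal (measure M (D N) / \<theta>)"
          by (simp add: emeasure_eq_measure ennreal_leI)
      qed
      finally have U1: "emeasure M (\<Union>L. E N L) \<le> ennreal (measure M (D N) / \<theta>)" .
      have "emeasure M A \<le> emeasure M (Z \<union> (\<Union>L. E N L))"
        using incl[OF N] Zs Es by (intro emeasure_mono) auto
      also have "\<dots> \<le> emeasure M Z + emeasure M (\<Union>L. E N L)"
        using Zs Es by (intro emeasure_subadditive) auto
      also have "\<dots> \<le> ennreal (measure M (D N) / \<theta>)" using Z0 U1 by simp
      finally have "measure M A \<le> measure M (D N) / \<theta>"
        using th by (simp add: emeasure_eq_measure ennreal_le_iff)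
      then show ?thesis using th by (simp add: field_simps)
    qed
    have Abound2: "\<theta> * measure M A \<le> measure M (D N)" for N
    proof -
      have "\<theta> * measure M A \<le> measure M (D (max N n1))" by (rule Abound) simp
      also have "\<dots> \<le> measure M (D N)" using Dmono[of N "max N n1"] Ds
        by (intro finite_measure_mono) auto
      finally show ?thesis .
    qed
    have "\<theta> * measure M A \<le> 0"
    proof (rule ccontr)
      assume "\<not> ?thesis"
      then have pos: "\<theta> * measure M A > 0" by simp
      then have "(INF N. emeasure M (D N)) < ennreal (\<theta> * measure M A)" using INF0 by simp
      then obtain N where "emeasure M (D N) < ennreal (\<theta> * measure M A)"
        by (auto simp: INF_less_iff)
      then have "measure M (D N) < \<theta> * measure M A"
        using pos by (simp add: emeasure_eq_measure ennreal_less_iff)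
      then show False using Abound2[of N] by simp
    qed
    then have "measure M A = 0" using th measure_nonneg[of M A]
      by (simp add: mult_le_0_iff)
    then show ?thesis unfolding A_def[symmetric] by (simp add: emeasure_eq_measure)
  qed
  have Fset: "{x\<in>space M. c < F x \<and> F x < d} \<in> sets M" for c d using Fm by measurable
  define B where "B = {x\<in>space M. \<not> (F x = 0 \<or> F x = \<infinity>)}"
  have Bsub: "B \<subseteq> (\<Union>n::nat. {x\<in>space M. ennreal (1 / Suc (Suc n)) < F x \<and> F x < ennreal (Suc n)})"
  proof
    fix x assume "x \<in> B"
    then have xs: "x \<in> space M" and F0: "F x \<noteq> 0" "F x \<noteq> \<infinity>" by (auto simp: B_def)
    obtain r where r: "F x = ennreal r" "r \<ge> 0" using F0(2) by (cases "F x") auto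
    have rp: "r > 0" using r F0(1) by (cases "r = 0") auto
    obtain n :: nat where n: "max r (1 / r) < real n" using reals_Archimedean2 by blast
    have 1: "r < real (Suc n)" using n by simp
    have "1 / r < real (Suc (Suc n))" using n by simp
    then have 2: "1 / real (Suc (Suc n)) < r" using rp by (simp add: field_simps)
    have "ennreal (1 / Suc (Suc n)) < ennreal r" using 2 rp by (intro ennreal_lessI) auto
    moreover have "ennreal r < ennreal (Suc n)" using 1 rp by (intro ennreal_lessI) auto
    ultimately have "ennreal (1 / Suc (Suc n)) < F x" "F x < ennreal (Suc n)" using r by auto
    then show "x \<in> (\<Union>n::nat. {x\<in>space M. ennreal (1 / Suc (Suc n)) < F x \<and> F x < ennreal (Suc n)})"
      using xs by (intro UN_I[of n]) auto
  qed
  have B0: "emeasure M B = 0"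
  proof -
    have "emeasure M (\<Union>n::nat. {x\<in>space M. ennreal (1 / Suc (Suc n)) < F x \<and> F x < ennreal (Suc n)}) = 0"
    proof (rule emeasure_UN_eq_0)
      show "emeasure M {x\<in>space M. ennreal (1 / Suc (Suc n)) < F x \<and> F x < ennreal (Suc n)} = 0" for n :: nat
        by (rule key) (auto simp: field_simps add_pos_nonneg)
      show "range (\<lambda>n::nat. {x\<in>space M. ennreal (1 / Suc (Suc n)) < F x \<and> F x < ennreal (Suc n)}) \<subseteq> sets M"
        using Fset by auto
    qed
    moreover have "(\<Union>n::nat. {x\<in>space M. ennreal (1 / Suc (Suc n)) < F x \<and> F x < ennreal (Suc n)}) \<in> sets M"
      using Fset by (intro sets.countable_UN) auto
    ultimately show ?thesis using emeasure_mono[OF Bsub, where M=M]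
      by (metis (no_types, lifting) le_zero_eq)
  qed
  have "B = {x\<in>space M. 0 < F x \<and> F x < \<infinity>}" unfolding B_def
    by (auto simp: zero_less_iff_neq_zero top.not_eq_extremum)
  then have Bs: "B \<in> sets M" using Fset by simp
  have "{x \<in> space M. F x = 0 \<or> F x = \<infinity>} = space M - B" unfolding B_def by auto
  moreover have "emeasure M (space M - B) = emeasure M (space M) - emeasure M B"
    using Bs by (rule emeasure_compl) simp
  ultimately show ?thesis using B0 emeasure_space_1 by simp
qed
end
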